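(* Let $G\ge 1$ and $B\ge 1$ be integers, and let $Z\in\{-1,+1\}^{G\times B}$ be a design matrix whose rows correspond to $G$ GEOs (regions) and whose columns correspond to $B$ brands, where $Z_{gb}=+1$ means that brand $b$ receives the treatment (T) in GEO $g$ and $Z_{gb}=-1$ means it receives the control (C). Suppose that each GEO has the treatment for exactly half of the brands (every row of $Z$ contains exactly $B/2$ entries equal to $+1$) and each brand is in the treatment group for exactly half of the GEOs (every column of $Z$ contains exactly $G/2$ entries equal to $+1$). Then it is impossible that simultaneously: (i) for every pair of distinct brands $b\ne b'$, each of the four combinations $(Z_{gb},Z_{gb'})\in\{TT,TC,CT,CC\}$ occurs for the same number of GEOs $g$; and (ii) for every pair of distinct GEOs $g\ne g'$, each of the four combinations $(Z_{gb},Z_{g'b})\in\{TT,TC,CT,CC\}$ occurs for the same number of brands $b$.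
   Context: T denotes the treatment level ($+1$) and C the control level ($-1$); for a pair of brands $b,b'$ the combination at GEO $g$ is the pair of levels $(Z_{gb},Z_{gb'})$, and analogously for a pair of GEOs. *)

theory Defs
  imports Main
begin

text \<open>A design matrix Z is a function on indices g < G (GEOs) and b < B (brands)
 with values in {-1,+1}; +1 is treatment T, -1 is control C.\<close>

definition combos_balanced_brands :: "nat \<Rightarrow> nat \<Rightarrow> (nat \<Rightarrow> nat \<Rightarrow> int) \<Rightarrow> bool" where
  "combos_balanced_brands G B Z \<longleftrightarrow>
     (\<forall>b<B. \<forall>b'<B. b \<noteq> b' \<longrightarrow>
        (\<forall>s\<in>{-1,1}. \<forall>t\<in>{-1,1}. \<forall>s'\<in>{-1,1}. \<forall>t'\<in>{-1,1}.
           card {g. g < G \<and> Z g b = s \<and> Z g b' = t} =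
           card {g. g < G \<and> Z g b = s' \<and> Z g b' = t'}))"

definition combos_balanced_geos :: "nat \<Rightarrow> nat \<Rightarrow> (nat \<Rightarrow> nat \<Rightarrow> int) \<Rightarrow> bool" where
  "combos_balanced_geos G B Z \<longleftrightarrow>
     (\<forall>g<G. \<forall>g'<G. g \<noteq> g' \<longrightarrow>
        (\<forall>s\<in>{-1,1}. \<forall>t\<in>{-1,1}. \<forall>s'\<in>{-1,1}. \<forall>t'\<in>{-1,1}.
           card {b. b < B \<and> Z g b = s \<and> Z g' b = t} =
           card {b. b < B \<and> Z g b = s' \<and> Z g' b = t'}))"

end

theory Submission
  imports Defs
begin

lemma cnt: "int (card {b. b < (B::nat) \<and> P b}) = (\<Sum>b<B. if P b then 1 else 0::int)"
proof -
  have "{b. b < B \<and> P b} = {..<B} \<inter> {b. P b}" by auto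
  moreover have "int (card ({..<B} \<inter> {b. P b})) = (\<Sum>b\<in>{..<B} \<inter> {b. P b}. 1)" by simp
  moreover have "(\<Sum>b\<in>{..<B} \<inter> {b. P b}. 1::int) = (\<Sum>b<B. if P b then 1 else 0)"
    by (subst sum.inter_restrict) (auto simp: finite_lessThan)
  ultimately show ?thesis by simp
qed

theorem theorem1:
  fixes G B :: nat and Z :: "nat \<Rightarrow> nat \<Rightarrow> int"
  assumes "G \<ge> 1" and "B \<ge> 1"
    and entries: "\<forall>g<G. \<forall>b<B. Z g b \<in> {-1, 1}"
    and rows: "\<forall>g<G. 2 * card {b. b < B \<and> Z g b = 1} = B"
    and cols: "\<forall>b<B. 2 * card {g. g < G \<and> Z g b = 1} = G"
  shows "\<not> (combos_balanced_brands G B Z \<and> combos_balanced_geos G B Z)"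
proof
  assume "combos_balanced_brands G B Z \<and> combos_balanced_geos G B Z"
  then have geo: "combos_balanced_geos G B Z" by simp
  have colsum: "(\<Sum>g<G. Z g b) = 0" if "b < B" for b
  proof -
    have e1: "(\<Sum>g<G. Z g b) = (\<Sum>g<G. (if Z g b = 1 then 1 else 0) - (if Z g b = -1 then 1 else 0))"
      by (rule sum.cong) (use entries that in auto)
    have e2: "int G = (\<Sum>g<G. (if Z g b = 1 then 1 else 0) + (if Z g b = -1 then 1 else 0))"
    proof -
      have "(\<Sum>g<G. (if Z g b = 1 then 1 else 0) + (if Z g b = -1 then 1 else (0::int))) = (\<Sum>g<G. 1)"
        by (rule sum.cong) (use entries that in auto)
      then show ?thesis by simp
    qed
    have c: "2 * int (card {g. g < G \<and> Z g b = 1}) = int G" using cols that by (metis of_nat_mult of_nat_numeral)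
    show ?thesis using e1 e2 c cnt[of G "\<lambda>g. Z g b = 1"] cnt[of G "\<lambda>g. Z g b = -1"]
      by (simp add: sum_subtractf sum.distrib)
  qed
  have inner0: "(\<Sum>b<B. Z 0 b * Z g b) = 0" if "g < G" "g \<noteq> 0" for g
  proof -
    have "(\<Sum>b<B. Z 0 b * Z g b) = (\<Sum>b<B. (if Z 0 b = 1 \<and> Z g b = 1 then 1 else 0)
        - (if Z 0 b = 1 \<and> Z g b = -1 then 1 else 0) - (if Z 0 b = -1 \<and> Z g b = 1 then 1 else 0)
        + (if Z 0 b = -1 \<and> Z g b = -1 then 1 else 0))"
      by (rule sum.cong) (use entries that in auto)
    also have "\<dots> = int (card {b. b < B \<and> Z 0 b = 1 \<and> Z g b = 1})
       - int (card {b. b < B \<and> Z 0 b = 1 \<and> Z g b = -1})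
       - int (card {b. b < B \<and> Z 0 b = -1 \<and> Z g b = 1})
       + int (card {b. b < B \<and> Z 0 b = -1 \<and> Z g b = -1})"
      by (simp only: cnt sum_subtractf sum.distrib)
    also have "\<dots> = 0"
    proof -
      have h: "card {b. b < B \<and> Z 0 b = s \<and> Z g b = t} = card {b. b < B \<and> Z 0 b = s' \<and> Z g b = t'}"
        if "s \<in> {-1,1}" "t \<in> {-1,1}" "s' \<in> {-1,1}" "t' \<in> {-1,1}" for s t s' t'
        using \<open>g < G\<close> \<open>g \<noteq> 0\<close> \<open>G \<ge> 1\<close> that
        by (intro geo[unfolded combos_balanced_geos_def, rule_format]) auto
      show ?thesis
        using h[of 1 1 1 "-1"] h[of 1 1 "-1" 1] h[of 1 1 "-1" "-1"] by simp
    qed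
    finally show ?thesis .
  qed
  have "(\<Sum>g<G. \<Sum>b<B. Z 0 b * Z g b) = (\<Sum>b<B. Z 0 b * (\<Sum>g<G. Z g b))"
    by (subst sum.swap) (simp add: sum_distrib_left)
  also have "\<dots> = 0" using colsum by simp
  finally have S0: "(\<Sum>g<G. \<Sum>b<B. Z 0 b * Z g b) = 0" .
  have "(\<Sum>g<G. \<Sum>b<B. Z 0 b * Z g b) = (\<Sum>g<G. if g = 0 then int B else 0)"
  proof (rule sum.cong)
    fix g assume g: "g \<in> {..<G}"
    show "(\<Sum>b<B. Z 0 b * Z g b) = (if g = 0 then int B else 0)"
    proof (cases "g = 0")
      case True
      have "(\<Sum>b<B. Z 0 b * Z 0 b) = (\<Sum>b<B. 1)"
      proof (rule sum.cong)
        fix b assume "b \<in> {..<B}"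
        then have "Z 0 b \<in> {-1,1}" using entries \<open>G \<ge> 1\<close> by auto
        then show "Z 0 b * Z 0 b = 1" by auto
      qed simp
      then show ?thesis using True by simp
    next
      case False then show ?thesis using inner0 g by simp
    qed
  qed simp
  also have "\<dots> = int B" using \<open>G \<ge> 1\<close> by (simp add: sum.delta)
  finally show False using S0 \<open>B \<ge> 1\<close> by simp
qed

end
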